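(* Assume the following hypothesis: there is a constant $A$ such that, for all sufficiently large $n$, every big irreducible representation $\lambda$ of $S_n$ satisfies $\left|\chi_\lambda(\pi)/d_\lambda\right| \le A^{t(\pi)} n^{-t(\pi)/2}$ for all $\pi\in S_n$. Then all big irreducible representations $\lambda$ of $S_n$ are $O(\sqrt{n})$-smooth, i.e. there is a constant $C$ such that for all sufficiently large $n$ and every big irrep $\lambda$ of $S_n$, $\sum_{\pi\in S_n}\left|\chi_\lambda(\pi)/d_\lambda\right|^4 \le C\sqrt{n}$.
   Context: An irreducible representation $\lambda$ of $S_n$ with character $\chi_\lambda$ and dimension $d_\lambda$ is called big if $d_\lambda > e^{-\sqrt{n}\log n}\sqrt{n!}$ (natural logarithm). For $\pi\in S_n$, $t(\pi)$ is the minimum number of transpositions whose product is $\pi$ (equivalently the number of non-fixed points minus the number of nontrivial cycles). *)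

theory Defs
  imports "HOL-Combinatorics.Transposition" "Jordan_Normal_Form.Matrix" Complex_Main
begin

definition Sym :: "nat \<Rightarrow> (nat \<Rightarrow> nat) set" where
  "Sym n = {p. p permutes {..<n}}"

definition tnum :: "nat \<Rightarrow> (nat \<Rightarrow> nat) \<Rightarrow> nat" where
  "tnum n p = (LEAST k. \<exists>ts :: (nat \<times> nat) list. length ts = k \<and>
      (\<forall>(a,b) \<in> set ts. a < n \<and> b < n \<and> a \<noteq> b) \<and>
      foldr (\<lambda>(a,b) f. transpose a b \<circ> f) ts id = p)"

definition mtrace :: "complex mat \<Rightarrow> complex" where
  "mtrace M = (\<Sum>i<dim_row M. M $$ (i,i))"

definition is_rep :: "nat \<Rightarrow> nat \<Rightarrow> ((nat \<Rightarrow> nat) \<Rightarrow> complex mat) \<Rightarrow> bool" where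
  "is_rep n d \<rho> \<longleftrightarrow>
     (\<forall>p \<in> Sym n. \<rho> p \<in> carrier_mat d d) \<and>
     \<rho> id = 1\<^sub>m d \<and>
     (\<forall>p \<in> Sym n. \<forall>q \<in> Sym n. \<rho> (p \<circ> q) = \<rho> p * \<rho> q)"

definition invariant_subspace :: "nat \<Rightarrow> nat \<Rightarrow> ((nat \<Rightarrow> nat) \<Rightarrow> complex mat) \<Rightarrow> complex vec set \<Rightarrow> bool" where
  "invariant_subspace n d \<rho> W \<longleftrightarrow>
     W \<subseteq> carrier_vec d \<and> 0\<^sub>v d \<in> W \<and>
     (\<forall>v \<in> W. \<forall>w \<in> W. v + w \<in> W) \<and>
     (\<forall>c. \<forall>v \<in> W. c \<cdot>\<^sub>v v \<in> W) \<and>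
     (\<forall>p \<in> Sym n. \<forall>v \<in> W. \<rho> p *\<^sub>v v \<in> W)"

definition is_irrep :: "nat \<Rightarrow> nat \<Rightarrow> ((nat \<Rightarrow> nat) \<Rightarrow> complex mat) \<Rightarrow> bool" where
  "is_irrep n d \<rho> \<longleftrightarrow> is_rep n d \<rho> \<and> d > 0 \<and>
     (\<forall>W. invariant_subspace n d \<rho> W \<longrightarrow> W = {0\<^sub>v d} \<or> W = carrier_vec d)"

definition character :: "((nat \<Rightarrow> nat) \<Rightarrow> complex mat) \<Rightarrow> (nat \<Rightarrow> nat) \<Rightarrow> complex" where
  "character \<rho> p = mtrace (\<rho> p)"

definition big :: "nat \<Rightarrow> nat \<Rightarrow> bool" where
  "big n d \<longleftrightarrow> real d > exp (- sqrt (real n) * ln (real n)) * sqrt (fact n)"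

end

theory Submission
  imports Defs
begin

primrec LL :: "nat \<Rightarrow> (nat \<Rightarrow> nat) \<Rightarrow> nat" where
  "LL 0 p = 0"
| "LL (Suc n) p = (if p n = n then 0 else 1) + LL n (transpose n (p n) \<circ> p)"

lemma LL_id: "LL n id = 0"
  by (induction n) auto

lemma LL_K: "a \<noteq> b \<Longrightarrow> LL n (transpose a b \<circ> p) \<le> LL n p + 1"
proof (induction n arbitrary: a b p)
  case 0
  then show ?case by simp
next
  case (Suc n)
  define j where "j = p n"
  define g where "g = transpose a b \<circ> p"
  have rp: "LL (Suc n) p = (if j = n then 0 else 1) + LL n (transpose n j \<circ> p)"
    by (simp only: LL.simps j_def)
  have rg: "LL (Suc n) g = (if g n = n then 0 else 1) + LL n (transpose n (g n) \<circ> g)"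
    by (simp only: LL.simps)
  have gn: "g n = transpose a b j" by (simp add: g_def j_def)
  have "LL (Suc n) g \<le> LL (Suc n) p + 1"
  proof (cases "n = a \<or> n = b")
    case False
    have "transpose n (transpose a b j) (transpose a b y) = transpose a b (transpose n j y)" for y
      using Suc.prems False by (auto simp: transpose_def)
    then have E: "transpose n (g n) \<circ> g = transpose a b \<circ> (transpose n j \<circ> p)"
      unfolding g_def by (simp add: fun_eq_iff j_def)
    have I: "(g n = n) = (j = n)" using False Suc.prems unfolding gn
      by (auto simp: transpose_def)
    have "LL (Suc n) g = (if j = n then 0 else 1) + LL n (transpose a b \<circ> (transpose n j \<circ> p))"
      by (simp only: rg E I)
    then show ?thesis using Suc.IH[OF Suc.prems, of "transpose n j \<circ> p"] rp by linarith
  next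
    case True
    then obtain c where c: "c \<noteq> n" "transpose a b = transpose n c"
      using Suc.prems by (metis transpose_commute)
    show ?thesis
    proof (cases "j = n \<or> j = c")
      case True
      have "transpose n (transpose n c j) (transpose n c y) = transpose n j y" for y
        using c True by (auto simp: transpose_def)
      then have E: "transpose n (g n) \<circ> g = transpose n j \<circ> p"
        using c unfolding g_def by (simp add: fun_eq_iff j_def)
      have "LL (Suc n) g \<le> 1 + LL n (transpose n j \<circ> p)"
        using rg E by simp
      then show ?thesis using rp by linarith
    next
      case False
      have "transpose n (transpose n c j) (transpose n c y) = transpose j c (transpose n j y)" for y
        using c False by (auto simp: transpose_def)
      then have E: "transpose n (g n) \<circ> g = transpose j c \<circ> (transpose n j \<circ> p)"
        using c unfolding g_def by (simp add: fun_eq_iff j_def)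
      have "j \<noteq> c" using False by auto
      have "LL (Suc n) g \<le> 1 + LL n (transpose j c \<circ> (transpose n j \<circ> p))"
        using rg E by simp
      moreover have "(if j = n then 0 else 1) = (1::nat)" using False by simp
      ultimately show ?thesis using Suc.IH[OF \<open>j \<noteq> c\<close>, of "transpose n j \<circ> p"] rp by linarith
    qed
  qed
  then show ?case unfolding g_def .
qed

lemma LL_fold:
  "(\<forall>(a,b) \<in> set ts. a \<noteq> b) \<Longrightarrow>
   LL n (foldr (\<lambda>(a,b) f. transpose a b \<circ> f) ts id) \<le> length ts"
proof (induction ts)
  case Nil
  then show ?case using LL_id[unfolded id_def] by simp
next
  case (Cons x ts)
  obtain a b where x: "x = (a,b)" by fastforce
  have ab: "a \<noteq> b" using Cons.prems x by auto
  have "LL n (foldr (\<lambda>(a,b) f. transpose a b \<circ> f) (x # ts) id)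
      = LL n (transpose a b \<circ> foldr (\<lambda>(a,b) f. transpose a b \<circ> f) ts id)"
    by (simp add: x)
  also have "\<dots> \<le> LL n (foldr (\<lambda>(a,b) f. transpose a b \<circ> f) ts id) + 1"
    by (rule LL_K[OF ab])
  moreover have "\<forall>(a,b)\<in>set ts. a \<noteq> b" using Cons.prems by auto
  then have "LL n (foldr (\<lambda>(a,b) f. transpose a b \<circ> f) ts id) \<le> length ts" by (rule Cons.IH)
  moreover have "length (x # ts) = length ts + 1" by simp
  ultimately show ?case by linarith
qed

lemma fact_exists:
  "p permutes {..<n} \<Longrightarrow> \<exists>ts :: (nat \<times> nat) list.
      (\<forall>(a,b) \<in> set ts. a < n \<and> b < n \<and> a \<noteq> b) \<and>
      foldr (\<lambda>(a,b) f. transpose a b \<circ> f) ts id = p"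
proof (induction n arbitrary: p)
  case 0
  then show ?case by (intro exI[of _ "[]"]) (auto simp: permutes_def fun_eq_iff)
next
  case (Suc n)
  have "{..<Suc n} = insert n {..<n}" by auto
  with Suc.prems have "transpose n (p n) \<circ> p permutes {..<n}"
    using permutes_insert_lemma by metis
  from Suc.IH[OF this] obtain ts where ts:
    "\<forall>(a,b) \<in> set ts. a < n \<and> b < n \<and> a \<noteq> b"
    "foldr (\<lambda>(a,b) f. transpose a b \<circ> f) ts id = transpose n (p n) \<circ> p" by blast
  have pn: "p n < Suc n" using Suc.prems permutes_in_image by fastforce
  have pp: "transpose n (p n) \<circ> (transpose n (p n) \<circ> p) = p"
    by (simp add: fun_eq_iff)
  show ?case
  proof (cases "p n = n")
    case True
    then have E: "transpose n (p n) \<circ> p = p" by simp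
    have "\<forall>(a,b) \<in> set ts. a < Suc n \<and> b < Suc n \<and> a \<noteq> b" using ts(1) by fastforce
    then show ?thesis using trans[OF ts(2) E] by blast
  next
    case False
    have F: "foldr (\<lambda>(a,b) f. transpose a b \<circ> f) ((n, p n) # ts) id
       = transpose n (p n) \<circ> foldr (\<lambda>(a,b) f. transpose a b \<circ> f) ts id" by simp
    have "\<forall>(a,b) \<in> set ((n, p n) # ts). a < Suc n \<and> b < Suc n \<and> a \<noteq> b"
      using ts(1) pn False by fastforce
    then show ?thesis using F[unfolded ts(2) pp] by blast
  qed
qed

lemma LL_le_tnum: "p \<in> Sym n \<Longrightarrow> LL n p \<le> tnum n p"
proof -
  assume "p \<in> Sym n"
  then have "p permutes {..<n}" by (simp add: Sym_def)
  from fact_exists[OF this] obtain ts :: "(nat \<times> nat) list" where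
    "(\<forall>(a,b) \<in> set ts. a < n \<and> b < n \<and> a \<noteq> b) \<and>
      foldr (\<lambda>(a,b) f. transpose a b \<circ> f) ts id = p" by blast
  then have ex: "\<exists>k. \<exists>ts :: (nat \<times> nat) list. length ts = k \<and>
      (\<forall>(a,b) \<in> set ts. a < n \<and> b < n \<and> a \<noteq> b) \<and>
      foldr (\<lambda>(a,b) f. transpose a b \<circ> f) ts id = p" by blast
  obtain ts :: "(nat \<times> nat) list" where ts: "length ts = tnum n p"
      "(\<forall>(a,b) \<in> set ts. a < n \<and> b < n \<and> a \<noteq> b)"
      "foldr (\<lambda>(a,b) f. transpose a b \<circ> f) ts id = p"
    using LeastI_ex[OF ex] unfolding tnum_def by blast
  have "\<forall>(a,b) \<in> set ts. a \<noteq> b" using ts(2) by auto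
  from LL_fold[OF this, of n] ts show ?thesis by simp
qed

lemma LL_step:
  assumes "s permutes {..<n}"
  shows "LL (Suc n) (transpose n j \<circ> s) = (if j = n then 0 else 1) + LL n s"
proof -
  have sn: "s n = n" using assms by (simp add: permutes_def)
  have E: "transpose n j \<circ> (transpose n j \<circ> s) = s" by (simp add: fun_eq_iff)
  have q: "(transpose n j \<circ> s) n = j" using sn by simp
  show ?thesis by (simp only: LL.simps q E)
qed

lemma sum_LL:
  fixes y :: real
  shows "(\<Sum>p \<in> Sym n. y ^ LL n p) = (\<Prod>i<n. 1 + real i * y)"
proof (induction n)
  case 0
  have S0: "Sym 0 = {id}" unfolding Sym_def by auto
  show ?case unfolding S0 by simp
next
  case (Suc n)
  define F where "F = (\<lambda>(j, s). transpose n j \<circ> (s :: nat \<Rightarrow> nat))"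
  have img: "Sym (Suc n) = F ` ({..n} \<times> Sym n)"
  proof
    show "F ` ({..n} \<times> Sym n) \<subseteq> Sym (Suc n)"
    proof
      fix q assume "q \<in> F ` ({..n} \<times> Sym n)"
      then obtain j s where q: "q = transpose n j \<circ> s" "j \<le> n" "s permutes {..<n}"
        by (auto simp: F_def Sym_def)
      have "s permutes {..<Suc n}" using q(3) by (rule permutes_subset) auto
      moreover have "transpose n j permutes {..<Suc n}" using q(2)
        by (intro permutes_swap_id) auto
      ultimately have "transpose n j \<circ> s permutes {..<Suc n}" by (rule permutes_compose)
      then show "q \<in> Sym (Suc n)" unfolding q(1) Sym_def mem_Collect_eq .
    qed
  next
    show "Sym (Suc n) \<subseteq> F ` ({..n} \<times> Sym n)"
    proof
      fix p assume "p \<in> Sym (Suc n)"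
      then have p: "p permutes insert n {..<n}" by (simp add: Sym_def lessThan_Suc)
      have "transpose n (p n) \<circ> p permutes {..<n}" using permutes_insert_lemma[OF p] .
      moreover have "p n \<le> n" using permutes_in_image[OF p, of n] by auto
      moreover have "p = F (p n, transpose n (p n) \<circ> p)" by (simp add: F_def fun_eq_iff)
      ultimately show "p \<in> F ` ({..n} \<times> Sym n)" by (auto simp: Sym_def)
    qed
  qed
  have inj: "inj_on F ({..n} \<times> Sym n)"
  proof (rule inj_onI)
    fix x z assume x: "x \<in> {..n} \<times> Sym n" and z: "z \<in> {..n} \<times> Sym n" and e: "F x = F z"
    obtain j s where xs: "x = (j, s)" by fastforce
    obtain k t where zs: "z = (k, t)" by fastforce
    have sn: "s n = n" "t n = n" using x z xs zs by (auto simp: Sym_def permutes_def)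
    have e2: "transpose n j \<circ> s = transpose n k \<circ> t" using e xs zs by (simp add: F_def)
    then have "transpose n j (s n) = transpose n k (t n)" by (metis comp_apply)
    then have jk: "j = k" using sn by simp
    have "s z = t z" for z
    proof -
      have "(transpose n j \<circ> s) z = (transpose n k \<circ> t) z" using e2 by (rule arg_cong)
      then have "transpose n j (s z) = transpose n j (t z)" using jk by (simp only: comp_apply)
      then show ?thesis by (rule transpose_eq_imp_eq)
    qed
    then have "s = t" by (rule ext)
    then show "x = z" using xs zs jk by simp
  qed
  have fin: "finite (Sym n)" by (simp add: Sym_def finite_permutations)
  have "(\<Sum>p \<in> Sym (Suc n). y ^ LL (Suc n) p) = (\<Sum>x \<in> {..n} \<times> Sym n. y ^ LL (Suc n) (F x))"
    unfolding img by (rule sum.reindex[OF inj, unfolded comp_def])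
  also have "\<dots> = (\<Sum>j \<in> {..n}. \<Sum>s \<in> Sym n. y ^ LL (Suc n) (F (j, s)))"
    unfolding sum.cartesian_product by (rule sum.cong) auto
  also have "\<dots> = (\<Sum>j \<in> {..n}. \<Sum>s \<in> Sym n. y ^ (if j = n then 0 else 1) * y ^ LL n s)"
  proof (intro sum.cong refl)
    fix j s assume "s \<in> Sym n"
    then have sp: "s permutes {..<n}" by (simp add: Sym_def)
    have Fj: "F (j, s) = transpose n j \<circ> s" by (simp add: F_def)
    have "LL (Suc n) (F (j, s)) = (if j = n then 0 else 1) + LL n s"
      unfolding Fj by (rule LL_step[OF sp])
    then show "y ^ LL (Suc n) (F (j, s)) = y ^ (if j = n then 0 else 1) * y ^ LL n s"
      by (simp only: power_add)
  qed
  also have "\<dots> = (\<Sum>j \<in> {..n}. y ^ (if j = n then 0 else 1)) * (\<Prod>i<n. 1 + real i * y)"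
  proof -
    have "(\<Sum>j \<in> {..n}. \<Sum>s \<in> Sym n. y ^ (if j = n then 0 else 1) * y ^ LL n s)
        = (\<Sum>j \<in> {..n}. y ^ (if j = n then 0 else 1) * (\<Sum>s \<in> Sym n. y ^ LL n s))"
      by (simp only: sum_distrib_left)
    also have "\<dots> = (\<Sum>j \<in> {..n}. y ^ (if j = n then 0 else 1)) * (\<Sum>s \<in> Sym n. y ^ LL n s)"
      by (simp only: sum_distrib_right)
    finally show ?thesis by (simp only: Suc.IH)
  qed
  also have "(\<Sum>j \<in> {..n}. y ^ (if j = n then 0 else 1)) = 1 + real n * y"
  proof -
    have "{..n} = insert n {..<n}" by auto
    then have "(\<Sum>j \<in> {..n}. y ^ (if j = n then 0 else 1)) = 1 + (\<Sum>j \<in> {..<n}. y ^ (if j = n then 0 else 1))"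
      by simp
    also have "(\<Sum>j \<in> {..<n}. y ^ (if j = n then 0 else 1)) = (\<Sum>j \<in> {..<n}. y)"
      by (intro sum.cong) auto
    finally show ?thesis by simp
  qed
  finally show ?case by (simp add: mult.commute)
qed

lemma prod_bound:
  fixes y :: real
  assumes "y \<ge> 0"
  shows "(\<Prod>i<n. 1 + real i * y) \<le> exp (real n * (real n * y))"
proof -
  have "(\<Prod>i<n. 1 + real i * y) \<le> (\<Prod>i<n. exp (real i * y))"
    by (intro prod_mono) (use assms in \<open>auto intro: exp_ge_add_one_self\<close>)
  also have "\<dots> = exp (\<Sum>i<n. real i * y)" by (simp add: exp_sum)
  also have "(\<Sum>i<n. real i * y) \<le> real (card {..<n}) * (real n * y)"
    by (rule sum_bounded_above) (use assms in \<open>auto intro: mult_right_mono\<close>)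
  then have "exp (\<Sum>i<n. real i * y) \<le> exp (real n * (real n * y))" by simp
  finally show ?thesis .
qed

lemma pointwise:
  fixes A c :: real and n t L :: nat
  assumes c: "c \<le> A ^ t * real n powr (- real t / 2)" and n: "n \<ge> 1"
    and An: "\<bar>A\<bar> \<le> sqrt (real n)" and Lt: "L \<le> t" and c0: "0 \<le> c"
  shows "c ^ 4 \<le> (A ^ 4 / (real n)^2) ^ L"
proof -
  define q where "q = \<bar>A\<bar> / sqrt (real n)"
  have sq: "sqrt (real n) > 0" using n by simp
  have q0: "0 \<le> q" and q1: "q \<le> 1" using An sq by (auto simp: q_def)
  have "real n powr (- real t / 2) = inverse (real n powr (real t / 2))"
    by (simp add: powr_minus)
  also have "real n powr (real t / 2) = (real n powr (1/2)) powr real t"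
    by (simp add: powr_powr)
  also have "\<dots> = sqrt (real n) ^ t"
    using sq by (simp add: powr_half_sqrt powr_realpow)
  finally have e: "real n powr (- real t / 2) = inverse (sqrt (real n) ^ t)" .
  have "A ^ t \<le> \<bar>A\<bar> ^ t"
    by (metis abs_ge_self power_abs)
  then have "A ^ t * real n powr (- real t / 2) \<le> \<bar>A\<bar> ^ t * inverse (sqrt (real n) ^ t)"
    unfolding e by (rule mult_right_mono) simp
  also have "\<dots> = q ^ t" by (simp add: q_def divide_inverse power_mult_distrib power_inverse)
  also have "\<dots> \<le> q ^ L" by (rule power_decreasing[OF Lt q0 q1])
  finally have "c \<le> q ^ L" using c by linarith
  then have "c ^ 4 \<le> (q ^ L) ^ 4" using c0 by (intro power_mono) auto
  also have "\<dots> = (q ^ 4) ^ L" by (simp add: power_mult[symmetric] mult.commute)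
  also have "q ^ 4 = A ^ 4 / (real n)^2"
  proof -
    have "q ^ 4 = \<bar>A\<bar> ^ 4 / sqrt (real n) ^ 4" by (simp add: q_def power_divide)
    also have "sqrt (real n) ^ 4 = (real n)^2"
      by (metis real_sqrt_pow2 of_nat_0_le_iff power_mult numeral_Bit0 mult_2 power2_eq_square
          numeral_One mult.commute power_even_eq)
    also have "\<bar>A\<bar> ^ 4 = A ^ 4" by (simp add: power_even_abs)
    finally show ?thesis .
  qed
  finally show ?thesis .
qed

theorem lemma2:
  assumes hyp: "\<exists>A::real. \<exists>N. \<forall>n\<ge>N. \<forall>d \<rho>. is_irrep n d \<rho> \<and> big n d \<longrightarrow>
      (\<forall>p \<in> Sym n. cmod (character \<rho> p / of_nat d)
          \<le> A ^ tnum n p * real n powr (- real (tnum n p) / 2))"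
  shows "\<exists>C::real. \<exists>N. \<forall>n\<ge>N. \<forall>d \<rho>. is_irrep n d \<rho> \<and> big n d \<longrightarrow>
      (\<Sum>p \<in> Sym n. cmod (character \<rho> p / of_nat d) ^ 4) \<le> C * sqrt (real n)"
proof -
  obtain A :: real and N where H: "\<forall>n\<ge>N. \<forall>d \<rho>. is_irrep n d \<rho> \<and> big n d \<longrightarrow>
      (\<forall>p \<in> Sym n. cmod (character \<rho> p / of_nat d)
          \<le> A ^ tnum n p * real n powr (- real (tnum n p) / 2))"
    using hyp by blast
  define M where "M = max N (nat \<lceil>A^2\<rceil> + 1)"
  have "\<forall>n\<ge>M. \<forall>d \<rho>. is_irrep n d \<rho> \<and> big n d \<longrightarrow>
      (\<Sum>p \<in> Sym n. cmod (character \<rho> p / of_nat d) ^ 4) \<le> exp (A^4) * sqrt (real n)"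
  proof (intro allI impI)
    fix n d \<rho> assume nM: "n \<ge> M" and ib: "is_irrep n d \<rho> \<and> big n d"
    have nN: "n \<ge> N" using nM by (simp add: M_def)
    have n1: "n \<ge> 1" using nM by (simp add: M_def)
    have "real n \<ge> A^2"
    proof -
      have "M \<ge> nat \<lceil>A^2\<rceil> + 1" unfolding M_def by (rule max.cobounded2)
      then have "nat \<lceil>A^2\<rceil> \<le> n" using nM by linarith
      then have "real (nat \<lceil>A^2\<rceil>) \<le> real n" by (rule of_nat_mono)
      then show ?thesis using real_nat_ceiling_ge[of "A^2"] by linarith
    qed
    then have An: "\<bar>A\<bar> \<le> sqrt (real n)" using real_sqrt_abs real_sqrt_le_mono by metis
    define y where "y = A ^ 4 / (real n)^2"
    have y0: "y \<ge> 0" by (simp add: y_def)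
    have pw: "cmod (character \<rho> p / of_nat d) ^ 4 \<le> y ^ LL n p" if p: "p \<in> Sym n" for p
      unfolding y_def
      by (rule pointwise[OF _ n1 An LL_le_tnum[OF p]]) (use H nN ib p in auto)
    have "(\<Sum>p \<in> Sym n. cmod (character \<rho> p / of_nat d) ^ 4) \<le> (\<Sum>p \<in> Sym n. y ^ LL n p)"
      by (rule sum_mono) (rule pw)
    also have "\<dots> = (\<Prod>i<n. 1 + real i * y)" by (rule sum_LL)
    also have "\<dots> \<le> exp (real n * (real n * y))" by (rule prod_bound[OF y0])
    also have "real n * (real n * y) = A ^ 4" using n1 by (simp add: y_def power2_eq_square)
    also have "exp (A ^ 4) \<le> exp (A^4) * sqrt (real n)"
      using n1 by simp
    finally show "(\<Sum>p \<in> Sym n. cmod (character \<rho> p / of_nat d) ^ 4) \<le> exp (A^4) * sqrt (real n)" .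
  qed
  then show ?thesis by blast
qed

end
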